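(* Let $d\ge2$, $0<4\gamma<\epsilon<\tfrac12$, $L>0$ and $\delta=1/L$. Let $\sigma\in\{-1,1\}^d$ and let $\mathbf{p}\in\mathrm{Gol}^{\triangle}_d(L)$ satisfy $\mathbf{v}_\sigma(\delta)^T\mathbf{p}=1$ and $\mathbf{v}_\tau(\delta)^T\mathbf{p}<1$ for all $\tau\ne\sigma$. Then $\mathbf{p}$ can be written as a convex combination of exactly $d$ vertices, namely $\mathbf{p}=\sum_{k=1}^d\alpha_{(k,\sigma_k)}\mathbf{w}_{(k,\sigma_k)}(L)$ with $\sum_{k=1}^d\alpha_{(k,\sigma_k)}=1$ and $\alpha_{(k,\sigma_k)}>0$ for all $k$; moreover, this convex combination is the unique convex combination of the $2d$ points $\mathbf{w}_{(k,s)}(L)$, $k\in\{1,\dots,d\}$, $s\in\{-1,1\}$, that equals $\mathbf{p}$.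
   Context: Goldfarb cube: $\mathrm{Gol}_d=\{\mathbf{x}\in\mathbb{R}^d:-z_k\le x_k\le z_k,\ 1\le k\le d\}$ with $z_1=1$, $z_2=1-\epsilon-\epsilon x_1$, $z_k=1-\epsilon+\epsilon\gamma-\epsilon(x_{k-1}-\gamma x_{k-2})$ ($k\ge3$); it is a full-dimensional polytope with origin in its interior, with $2d$ facets (one per inequality) and $2^d$ distinct vertices $\mathbf{v}_\sigma$, $\sigma\in\{-1,1\}^d$, where $\mathbf{v}_\sigma$ is the point at which, for each $k$, $x_k\le z_k$ (if $\sigma_k=1$) resp. $-z_k\le x_k$ (if $\sigma_k=-1$) is tight; $\mathbf{v}_\sigma$ lies on exactly these $d$ facets. For $(k,s)\in\{1,\dots,d\}\times\{-1,1\}$, $\mathbf{w}_{(k,s)}$ is the unique vector such that the inequality $x_k\le z_k$ (for $s=1$) or $-z_k\le x_k$ (for $s=-1$) is equivalent to $\mathbf{w}_{(k,s)}^T\mathbf{x}\le1$; explicitly $\mathbf{w}_{(1,s)}=s\mathbf{e}_1$, $\mathbf{w}_{(2,s)}=(\epsilon\mathbf{e}_1+s\mathbf{e}_2)/(1-\epsilon)$, $\mathbf{w}_{(k,s)}=(-\epsilon\gamma\mathbf{e}_{k-2}+\epsilon\mathbf{e}_{k-1}+s\mathbf{e}_k)/(1-\epsilon+\epsilon\gamma)$ for $k\ge3$. The dual Goldfarb cube $\mathrm{Gol}^{\triangle}_d:=\{\mathbf{x}:\mathbf{v}_\tau^T\mathbf{x}\le1\ \forall\tau\}$ is the convex hull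 of the $2d$ points $\mathbf{w}_{(k,s)}$, which are its vertices. Stretching: $\mathbf{x}(t):=(tx_1,\dots,tx_{d-2},x_{d-1},x_d)^T$; $\mathrm{Gol}^{\triangle}_d(L):=\{\mathbf{x}(L):\mathbf{x}\in\mathrm{Gol}^{\triangle}_d\}=\mathrm{conv}\{\mathbf{w}_{(k,s)}(L)\}=\{\mathbf{x}:\mathbf{v}_\tau(1/L)^T\mathbf{x}\le1\ \forall\tau\}$. *)

theory Defs
  imports Main "HOL-Analysis.Analysis"
begin

text \<open>Vectors of R^d are represented as functions nat => real whose relevant
components are those with index in {1..d} (components outside are 0 for the
points w below).\<close>

definition inner_d :: "nat \<Rightarrow> (nat \<Rightarrow> real) \<Rightarrow> (nat \<Rightarrow> real) \<Rightarrow> real" where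
  "inner_d d x y = (\<Sum>i=1..d. x i * y i)"

definition unit_e :: "nat \<Rightarrow> nat \<Rightarrow> real" where
  "unit_e k = (\<lambda>i. if i = k then 1 else 0)"

definition sign_vecs :: "nat \<Rightarrow> (nat \<Rightarrow> int) set" where
  "sign_vecs d = {\<sigma>. \<forall>k\<in>{1..d}. \<sigma> k \<in> {-1, 1}}"

definition gol_z :: "real \<Rightarrow> real \<Rightarrow> nat \<Rightarrow> (nat \<Rightarrow> real) \<Rightarrow> real" where
  "gol_z \<epsilon> \<gamma> k x =
     (if k = 1 then 1
      else if k = 2 then 1 - \<epsilon> - \<epsilon> * x 1
      else 1 - \<epsilon> + \<epsilon> * \<gamma> - \<epsilon> * (x (k - 1) - \<gamma> * x (k - 2)))"

text \<open>The vertex v_sigma: the point where x_k = sigma_k z_k(x) for each k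
(the triangular system solved by forward substitution).\<close>
fun gol_vertex :: "real \<Rightarrow> real \<Rightarrow> (nat \<Rightarrow> int) \<Rightarrow> nat \<Rightarrow> real" where
  "gol_vertex \<epsilon> \<gamma> \<sigma> 0 = 0"
| "gol_vertex \<epsilon> \<gamma> \<sigma> (Suc 0) = of_int (\<sigma> 1)"
| "gol_vertex \<epsilon> \<gamma> \<sigma> (Suc (Suc 0)) =
     of_int (\<sigma> 2) * (1 - \<epsilon> - \<epsilon> * gol_vertex \<epsilon> \<gamma> \<sigma> 1)"
| "gol_vertex \<epsilon> \<gamma> \<sigma> (Suc (Suc (Suc k))) =
     of_int (\<sigma> (k + 3)) * (1 - \<epsilon> + \<epsilon> * \<gamma>
        - \<epsilon> * (gol_vertex \<epsilon> \<gamma> \<sigma> (k + 2) - \<gamma> * gol_vertex \<epsilon> \<gamma> \<sigma> (k + 1)))"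

definition gol_w :: "real \<Rightarrow> real \<Rightarrow> nat \<Rightarrow> int \<Rightarrow> nat \<Rightarrow> real" where
  "gol_w \<epsilon> \<gamma> k s =
     (if k = 1 then (\<lambda>i. of_int s * unit_e 1 i)
      else if k = 2 then (\<lambda>i. (\<epsilon> * unit_e 1 i + of_int s * unit_e 2 i) / (1 - \<epsilon>))
      else (\<lambda>i. (- \<epsilon> * \<gamma> * unit_e (k - 2) i + \<epsilon> * unit_e (k - 1) i + of_int s * unit_e k i)
               / (1 - \<epsilon> + \<epsilon> * \<gamma>)))"

definition stretch :: "nat \<Rightarrow> real \<Rightarrow> (nat \<Rightarrow> real) \<Rightarrow> nat \<Rightarrow> real" where
  "stretch d t x = (\<lambda>i. if 1 \<le> i \<and> i \<le> d - 2 then t * x i else x i)"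

definition w_index :: "nat \<Rightarrow> (nat \<times> int) set" where
  "w_index d = {1..d} \<times> {-1, 1}"

definition w_comb :: "nat \<Rightarrow> real \<Rightarrow> real \<Rightarrow> real \<Rightarrow> (nat \<times> int \<Rightarrow> real) \<Rightarrow> nat \<Rightarrow> real" where
  "w_comb d \<epsilon> \<gamma> L a = (\<lambda>i. \<Sum>(k, s)\<in>w_index d. a (k, s) * stretch d L (gol_w \<epsilon> \<gamma> k s) i)"

definition gol_dual_L :: "nat \<Rightarrow> real \<Rightarrow> real \<Rightarrow> real \<Rightarrow> (nat \<Rightarrow> real) set" where
  "gol_dual_L d \<epsilon> \<gamma> L =
     {p. \<exists>a. (\<forall>ks\<in>w_index d. a ks \<ge> 0) \<and> (\<Sum>ks\<in>w_index d. a ks) = 1 \<and> p = w_comb d \<epsilon> \<gamma> L a}"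

end

theory Submission
  imports Defs
begin

lemma vertex_z:
  assumes "k \<ge> 1"
  shows "gol_vertex e g \<sigma> k = of_int (\<sigma> k) * gol_z e g k (gol_vertex e g \<sigma>)"
proof -
  consider "k = 1" | "k = 2" | m where "k = Suc (Suc (Suc m))"
    using assms by (metis One_nat_def Suc_1 not0_implies_Suc not_one_le_zero)
  then show ?thesis
  proof cases
    case 1 then show ?thesis by (simp add: gol_z_def)
  next
    case 2 then show ?thesis by (simp add: gol_z_def numeral_2_eq_2)
  next
    case 3 then show ?thesis by (simp add: gol_z_def numeral_3_eq_3 add.commute)
  qed
qed

lemma step_arith:
  fixes a b e g z :: real
  assumes "\<bar>a\<bar> \<le> 1" "\<bar>b\<bar> \<le> 1" "1 + b \<ge> e/2 * (1 + a)"
    and "0 < 4*g" "4*g < e" "e < 1/2"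
    and "z = 1 - e + e*g - e*(b - g*a)"
  shows "0 < z" "z \<le> 1" "1 - z \<ge> e/2 * (1 + b)" "1 + z \<ge> e/2 * (1 + b)"
proof -
  have h1: "e*b \<le> e" using assms by (simp add: mult_left_le)
  have h2: "e*g*a \<ge> -(e*g)" proof -
    have "e*g > 0" using assms by simp
    moreover have "-1 \<le> a" using assms(1) by simp
    ultimately have "e*g*(-1) \<le> e*g*a" by (intro mult_left_mono) auto
    then show ?thesis by simp
  qed
  have ez: "z = 1 - e + e*g - e*b + e*g*a" using assms(7) by (simp add: algebra_simps)
  show "0 < z" using h1 h2 ez assms(6) by linarith
  have ha: "0 \<le> 1 + a" "0 \<le> 1 + b" using assms by auto
  have h3: "e*g*(1+a) \<le> 2*g*(1+b)"
  proof -
    have "e*g*(1+a) = 2*g*(e/2*(1+a))" by simp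
    also have "\<dots> \<le> 2*g*(1+b)" using assms(3,4) by (intro mult_left_mono) auto
    finally show ?thesis .
  qed
  have h4: "2*g*(1+b) \<le> e/2*(1+b)" using assms ha by (intro mult_right_mono) auto
  have e1: "1 - z = e*(1+b) - e*g*(1+a)" using assms by (simp add: algebra_simps)
  show c3: "1 - z \<ge> e/2 * (1 + b)" using e1 h3 h4 by linarith
  have "e/2 * (1+b) \<ge> 0" using ha assms by simp
  then show "z \<le> 1" using c3 by linarith
  show "1 + z \<ge> e/2 * (1 + b)"
  proof -
    have "e/2*(1+b) \<le> 1/4 * 2" using assms ha by (intro mult_mono) auto
    then show ?thesis using \<open>0 < z\<close> by linarith
  qed
qed

lemma sign_cases: "\<sigma> \<in> sign_vecs d \<Longrightarrow> k \<in> {1..d} \<Longrightarrow> \<sigma> k = -1 \<or> \<sigma> k = 1"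
  by (auto simp: sign_vecs_def)

lemma vertex_inv:
  assumes s: "\<sigma> \<in> sign_vecs d" and p: "0 < 4*g" "4*g < e" "e < 1/2"
  shows "1 \<le> k \<Longrightarrow> k+1 \<le> d \<Longrightarrow>
     \<bar>gol_vertex e g \<sigma> k\<bar> \<le> 1 \<and> \<bar>gol_vertex e g \<sigma> (k+1)\<bar> \<le> 1 \<and>
     e/2*(1 + gol_vertex e g \<sigma> k) \<le> 1 + gol_vertex e g \<sigma> (k+1)"
proof (induction k)
  case 0 then show ?case by simp
next
  case (Suc k)
  show ?case
  proof (cases "k = 0")
    case True
    have v1: "gol_vertex e g \<sigma> 1 = of_int (\<sigma> 1)" by simp
    have v2: "gol_vertex e g \<sigma> 2 = of_int (\<sigma> 2) * (1 - e - e * of_int (\<sigma> 1))"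
      by (simp add: numeral_2_eq_2)
    have "\<sigma> 1 = -1 \<or> \<sigma> 1 = 1" "\<sigma> 2 = -1 \<or> \<sigma> 2 = 1"
      using sign_cases[OF s] Suc.prems True by auto
    then show ?thesis using True v1 v2 p by (auto simp: numeral_2_eq_2)
  next
    case False
    then obtain m where km: "k = Suc m" by (cases k) auto
    have IH: "\<bar>gol_vertex e g \<sigma> k\<bar> \<le> 1 \<and> \<bar>gol_vertex e g \<sigma> (k+1)\<bar> \<le> 1 \<and>
     e/2*(1 + gol_vertex e g \<sigma> k) \<le> 1 + gol_vertex e g \<sigma> (k+1)"
      using Suc False by auto
    define a where "a = gol_vertex e g \<sigma> k"
    define b where "b = gol_vertex e g \<sigma> (k+1)"
    define z where "z = 1 - e + e*g - e*(b - g*a)"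
    have vk: "gol_vertex e g \<sigma> (Suc k + 1) = of_int (\<sigma> (k+2)) * z"
      unfolding z_def a_def b_def km by (simp add: add.commute eval_nat_numeral)
    have "\<sigma> (k+2) = -1 \<or> \<sigma> (k+2) = 1" using sign_cases[OF s] Suc.prems by auto
    moreover note st = step_arith[of a b e g z, OF _ _ _ p z_def] IH[folded a_def b_def]
    ultimately show ?thesis unfolding vk using b_def by auto
  qed
qed

lemma vertex_bound:
  assumes s: "\<sigma> \<in> sign_vecs d" and p: "0 < 4*g" "4*g < e" "e < 1/2" and d: "d \<ge> 2"
    and j: "1 \<le> j" "j \<le> d"
  shows "\<bar>gol_vertex e g \<sigma> j\<bar> \<le> 1"
proof (cases "j + 1 \<le> d")
  case True then show ?thesis using vertex_inv[OF s p j(1)] by auto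
next
  case False
  then have "j - 1 + 1 = j" "1 \<le> j - 1" "j - 1 + 1 \<le> d" using d j by auto
  then show ?thesis using vertex_inv[OF s p, of "j - 1"] by metis
qed

lemma abs_mult_bound: fixes c x :: real assumes "\<bar>x\<bar> \<le> 1" "c \<ge> 0"
  shows "c*x \<le> c" "-c \<le> c*x"
proof -
  have "c*x \<le> c*1" using assms by (intro mult_left_mono) auto
  then show "c*x \<le> c" by simp
  have "c*(-1) \<le> c*x" using assms by (intro mult_left_mono) auto
  then show "-c \<le> c*x" by simp
qed

lemma z_pos:
  assumes s: "\<sigma> \<in> sign_vecs d" and p: "0 < 4*g" "4*g < e" "e < 1/2" and d: "d \<ge> 2"
    and k: "1 \<le> k" "k \<le> d"
  shows "gol_z e g k (gol_vertex e g \<sigma>) > 0"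
proof -
  have e0: "e \<ge> 0" "e*g \<ge> 0" using p by auto
  consider "k = 1" | "k = 2" | "k \<ge> 3" using k by linarith
  then show ?thesis
  proof cases
    case 1 then show ?thesis by (simp add: gol_z_def)
  next
    case 2
    have "\<bar>gol_vertex e g \<sigma> 1\<bar> \<le> 1" by (rule vertex_bound[OF s p d]) (use d in auto)
    from abs_mult_bound(1)[OF this e0(1)]
    have "e * gol_vertex e g \<sigma> 1 \<le> e" .
    moreover have "gol_z e g k (gol_vertex e g \<sigma>) = 1 - e - e * gol_vertex e g \<sigma> 1"
      using 2 by (simp add: gol_z_def)
    ultimately show ?thesis using p by linarith
  next
    case 3
    have "\<bar>gol_vertex e g \<sigma> (k-1)\<bar> \<le> 1" "\<bar>gol_vertex e g \<sigma> (k-2)\<bar> \<le> 1"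
      using vertex_bound[OF s p d] 3 k by auto
    from abs_mult_bound(1)[OF this(1) e0(1)] abs_mult_bound(2)[OF this(2) e0(2)]
    have "e * gol_vertex e g \<sigma> (k-1) \<le> e" "-(e*g) \<le> e*g*gol_vertex e g \<sigma> (k-2)" by auto
    moreover have "gol_z e g k (gol_vertex e g \<sigma>) = 1 - e + e*g - e * gol_vertex e g \<sigma> (k-1)
        + e*g*gol_vertex e g \<sigma> (k-2)"
      using 3 by (simp add: gol_z_def algebra_simps)
    ultimately show ?thesis using p by linarith
  qed
qed

lemma sum_unit: "(\<Sum>i=1..d. x i * unit_e j i) = (if j \<in> {1..d} then x j else 0)"
  by (simp add: unit_e_def if_distrib cong: if_cong)

lemma lin3: fixes x u v w :: "nat \<Rightarrow> real" shows "(\<Sum>i\<in>A. x i * ((a * u i + b * v i + c * w i) / q)) =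
   (a * (\<Sum>i\<in>A. x i * u i) + b * (\<Sum>i\<in>A. x i * v i) + c * (\<Sum>i\<in>A. x i * w i)) / q"
proof -
  have "(\<Sum>i\<in>A. x i * ((a * u i + b * v i + c * w i) / q)) =
     (\<Sum>i\<in>A. (a * (x i * u i) + b * (x i * v i) + c * (x i * w i)) / q)"
    by (rule sum.cong) (simp_all add: times_divide_eq_right distrib_left mult.left_commute)
  also have "\<dots> = (\<Sum>i\<in>A. a * (x i * u i) + b * (x i * v i) + c * (x i * w i)) / q"
    by (simp add: sum_divide_distrib)
  also have "\<dots> = (a * (\<Sum>i\<in>A. x i * u i) + b * (\<Sum>i\<in>A. x i * v i) + c * (\<Sum>i\<in>A. x i * w i)) / q"
    by (simp add: sum.distrib sum_distrib_left)
  finally show ?thesis .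
qed

lemma lin2: fixes x v w :: "nat \<Rightarrow> real" shows "(\<Sum>i\<in>A. x i * ((b * v i + c * w i) / q)) =
   (b * (\<Sum>i\<in>A. x i * v i) + c * (\<Sum>i\<in>A. x i * w i)) / q"
  using lin3[where u="\<lambda>i. 0" and a=0] by simp

lemma lin1: fixes x w :: "nat \<Rightarrow> real" shows "(\<Sum>i\<in>A. x i * (c * w i)) = c * (\<Sum>i\<in>A. x i * w i)"
  by (simp add: sum_distrib_left algebra_simps)

lemma inner_w:
  assumes "1 \<le> k" "k \<le> d"
  shows "inner_d d x (gol_w e g k s) =
    (if k = 1 then of_int s * x 1
     else if k = 2 then (e * x 1 + of_int s * x 2) / (1 - e)
     else (- e * g * x (k-2) + e * x (k-1) + of_int s * x k) / (1 - e + e * g))"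
proof -
  consider "k = 1" | "k = 2" | "k \<ge> 3" using assms by linarith
  then show ?thesis
  proof cases
    case 1
    then have "gol_w e g k s = (\<lambda>i. of_int s * unit_e 1 i)" by (simp add: gol_w_def)
    then show ?thesis using assms 1 unfolding inner_d_def by (simp only: lin1 sum_unit) simp
  next
    case 2
    then have "gol_w e g k s = (\<lambda>i. (e * unit_e 1 i + of_int s * unit_e 2 i) / (1 - e))" by (simp add: gol_w_def)
    then show ?thesis using assms 2 unfolding inner_d_def by (simp only: lin2 sum_unit) simp
  next
    case 3
    then have "gol_w e g k s = (\<lambda>i. (- e * g * unit_e (k - 2) i + e * unit_e (k - 1) i + of_int s * unit_e k i)
               / (1 - e + e * g))" by (simp add: gol_w_def)
    moreover have "k - 1 \<in> {1..d}" "k - 2 \<in> {1..d}" "k \<in> {1..d}" using assms 3 by auto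
    ultimately show ?thesis using assms 3 unfolding inner_d_def by (simp only: lin3 sum_unit) simp
  qed
qed

lemma div_aux: fixes X Y c :: real shows "c \<noteq> 0 \<Longrightarrow> X = c - Y \<Longrightarrow> X / c = 1 - Y / c"
  by (simp add: diff_divide_distrib)

lemma F_key:
  assumes k: "1 \<le> k" "k \<le> d" and p: "0 < e" "e < 1/2" "0 < g"
  shows "inner_d d (gol_vertex e g \<tau>) (gol_w e g k s) =
     1 - (1 - of_int s * of_int (\<tau> k)) * gol_z e g k (gol_vertex e g \<tau>)
         / (if k = 1 then 1 else if k = 2 then 1 - e else 1 - e + e * g)"
proof -
  define v where "v = gol_vertex e g \<tau>"
  have vk: "v j = of_int (\<tau> j) * gol_z e g j v" if "1 \<le> j" for j
    unfolding v_def using vertex_z[OF that] .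
  have "e * g > 0" using p by simp
  then have c1: "1 - e \<noteq> 0" "1 - e + e*g \<noteq> 0" using p by linarith+
  consider "k = 1" | "k = 2" | "k \<ge> 3" using k by linarith
  then show ?thesis
  proof cases
    case 1
    then show ?thesis using vk[of 1] inner_w[OF k] unfolding v_def[symmetric]
      by (simp add: gol_z_def algebra_simps)
  next
    case 2
    define Z where "Z = gol_z e g k v"
    then have z: "Z = 1 - e - e * v 1" using 2 by (simp add: gol_z_def)
    have v2: "v 2 = of_int (\<tau> k) * Z" using vk[of 2] 2 Z_def by simp
    have "(e * v 1 + of_int s * v 2) / (1 - e) = 1 - (1 - of_int s * of_int (\<tau> k)) * Z / (1 - e)"
      by (rule div_aux[OF c1(1)]) (unfold v2 z, simp add: algebra_simps)
    then show ?thesis using inner_w[OF k] 2 unfolding v_def[symmetric] Z_def by simp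
  next
    case 3
    define Z where "Z = gol_z e g k v"
    then have z: "Z = 1 - e + e*g - e * (v (k-1) - g * v (k-2))" using 3 by (simp add: gol_z_def)
    have v2: "v k = of_int (\<tau> k) * Z" using vk[of k] 3 Z_def by simp
    have "(- e * g * v (k-2) + e * v (k-1) + of_int s * v k) / (1 - e + e * g)
       = 1 - (1 - of_int s * of_int (\<tau> k)) * Z / (1 - e + e * g)"
      by (rule div_aux[OF c1(2)]) (unfold v2 z, simp add: algebra_simps)
    then show ?thesis using inner_w[OF k] 3 unfolding v_def[symmetric] Z_def by simp
  qed
qed

lemma F_vals:
  assumes t: "\<tau> \<in> sign_vecs d" and p: "0 < 4*g" "4*g < e" "e < 1/2" and d: "d \<ge> 2"
    and k: "1 \<le> k" "k \<le> d" and s: "s = -1 \<or> s = 1"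
  shows "s = \<tau> k \<Longrightarrow> inner_d d (gol_vertex e g \<tau>) (gol_w e g k s) = 1"
    and "s \<noteq> \<tau> k \<Longrightarrow> inner_d d (gol_vertex e g \<tau>) (gol_w e g k s) < 1"
proof -
  have p': "0 < e" "e < 1/2" "0 < g" using p by auto
  have tk: "\<tau> k = -1 \<or> \<tau> k = 1" using sign_cases[OF t] k by auto
  define c where "c = (if k = 1 then 1 else if k = 2 then 1 - e else 1 - e + e * g)"
  have "e*g > 0" using p' by simp
  then have "1 - e + e*g > 0" "1 - e > 0" using p' by linarith+
  then have cpos: "c > 0" unfolding c_def by auto
  have Z: "gol_z e g k (gol_vertex e g \<tau>) > 0" using z_pos[OF t p d k] .
  note key = F_key[OF k p', of \<tau> s, folded c_def]
  show "s = \<tau> k \<Longrightarrow> inner_d d (gol_vertex e g \<tau>) (gol_w e g k s) = 1"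
    using key tk by auto
  assume "s \<noteq> \<tau> k"
  then have "of_int s * of_int (\<tau> k) = (-1::real)" using s tk by auto
  then have "inner_d d (gol_vertex e g \<tau>) (gol_w e g k s) = 1 - 2 * gol_z e g k (gol_vertex e g \<tau>) / c"
    using key by simp
  moreover have "2 * gol_z e g k (gol_vertex e g \<tau>) / c > 0" using Z cpos by simp
  ultimately show "inner_d d (gol_vertex e g \<tau>) (gol_w e g k s) < 1" by linarith
qed

lemma stretch_prod: "\<delta> * L = 1 \<Longrightarrow> stretch d \<delta> v i * stretch d L w i = v i * w i"
  unfolding stretch_def by (auto simp: algebra_simps)

lemma inner_stretch:
  assumes "\<delta> * L = 1"
  shows "inner_d d (stretch d \<delta> v) (\<lambda>i. \<Sum>j\<in>J. c j * stretch d L (W j) i)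
       = (\<Sum>j\<in>J. c j * inner_d d v (W j))"
proof -
  have "inner_d d (stretch d \<delta> v) (\<lambda>i. \<Sum>j\<in>J. c j * stretch d L (W j) i)
      = (\<Sum>i=1..d. \<Sum>j\<in>J. c j * (stretch d \<delta> v i * stretch d L (W j) i))"
    unfolding inner_d_def by (simp add: sum_distrib_left algebra_simps)
  also have "\<dots> = (\<Sum>i=1..d. \<Sum>j\<in>J. c j * (v i * W j i))"
    using stretch_prod[OF assms] by simp
  also have "\<dots> = (\<Sum>j\<in>J. c j * inner_d d v (W j))"
    unfolding inner_d_def by (subst sum.swap) (simp add: sum_distrib_left)
  finally show ?thesis .
qed

lemma w_comb_alt: "w_comb d e g L a = (\<lambda>i. \<Sum>ks\<in>w_index d. a ks * stretch d L (case_prod (gol_w e g) ks) i)"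
  unfolding w_comb_def by (simp add: split_def)

lemma sum_w_index: "(\<Sum>ks\<in>w_index d. f ks) = (\<Sum>k=1..d. f (k, -1) + f (k, 1))"
  unfolding w_index_def by (simp add: sum.cartesian_product')

lemma sum_sigma:
  assumes "\<sigma> \<in> sign_vecs d" "\<forall>k\<in>{1..d}. f (k, - \<sigma> k) = 0"
  shows "(\<Sum>ks\<in>w_index d. f ks) = (\<Sum>k=1..d. f (k, \<sigma> k))"
  unfolding sum_w_index
proof (rule sum.cong)
  fix k assume k: "k \<in> {1..d}"
  then have "\<sigma> k = -1 \<or> \<sigma> k = 1" using sign_cases[OF assms(1)] by auto
  moreover have "f (k, - \<sigma> k) = 0" using assms(2) k by blast
  ultimately show "f (k, -1) + f (k, 1) = f (k, \<sigma> k)" by auto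
qed simp

lemma gw_lower: "k < j \<Longrightarrow> gol_w e g k s j = 0"
  by (auto simp: gol_w_def unit_e_def)

lemma gw_diag:
  assumes "1 \<le> k" "s \<noteq> 0" "0 < e" "e < 1/2" "0 < g"
  shows "gol_w e g k s k \<noteq> 0"
proof -
  have "e*g > 0" using assms by simp
  then have "1 - e + e*g \<noteq> 0" "1 - e \<noteq> 0" using assms by linarith+
  then show ?thesis using assms by (auto simp: gol_w_def unit_e_def)
qed

lemma indep:
  assumes sg: "\<sigma> \<in> sign_vecs d" and p: "0 < e" "e < 1/2" "0 < g" and L: "L \<noteq> 0"
    and z: "\<forall>i. (\<Sum>k=1..d. b k * stretch d L (gol_w e g k (\<sigma> k)) i) = 0"
  shows "\<forall>k\<in>{1..d}. b k = 0"
proof (rule ccontr)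
  assume nz: "\<not> (\<forall>k\<in>{1..d}. b k = 0)"
  define S where "S = {k\<in>{1..d}. b k \<noteq> 0}"
  have fS: "finite S" "S \<noteq> {}" using nz unfolding S_def by auto
  define j where "j = Max S"
  have jS: "j \<in> S" using fS unfolding j_def by simp
  have jmax: "\<And>k. k \<in> S \<Longrightarrow> k \<le> j" using fS unfolding j_def by simp
  have j1: "j \<in> {1..d}" "b j \<noteq> 0" using jS unfolding S_def by auto
  have st0: "stretch d L x j = 0" if "x j = 0" for x using that unfolding stretch_def by simp
  have "(\<Sum>k=1..d. b k * stretch d L (gol_w e g k (\<sigma> k)) j)
      = b j * stretch d L (gol_w e g j (\<sigma> j)) j + (\<Sum>k\<in>{1..d} - {j}. b k * stretch d L (gol_w e g k (\<sigma> k)) j)"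
    using j1 by (simp add: sum.remove)
  also have "(\<Sum>k\<in>{1..d} - {j}. b k * stretch d L (gol_w e g k (\<sigma> k)) j) = 0"
  proof (rule sum.neutral, rule ballI)
    fix k assume k: "k \<in> {1..d} - {j}"
    show "b k * stretch d L (gol_w e g k (\<sigma> k)) j = 0"
    proof (cases "k < j")
      case True then show ?thesis using st0 gw_lower[OF True] by simp
    next
      case False
      then have "k \<notin> S" using jmax k by force
      then show ?thesis using k unfolding S_def by auto
    qed
  qed
  finally have "b j * stretch d L (gol_w e g j (\<sigma> j)) j = 0" using z by simp
  moreover have "\<sigma> j \<noteq> 0" using sign_cases[OF sg j1(1)] by auto
  then have "gol_w e g j (\<sigma> j) j \<noteq> 0" using gw_diag[OF _ _ p] j1 by auto
  then have "stretch d L (gol_w e g j (\<sigma> j)) j \<noteq> 0" using L unfolding stretch_def by auto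
  ultimately show False using j1(2) by simp
qed
theorem lemma5:
  fixes d :: nat and \<epsilon> \<gamma> L \<delta> :: real and \<sigma> :: "nat \<Rightarrow> int" and p :: "nat \<Rightarrow> real"
  assumes "d \<ge> 2"
    and "0 < 4 * \<gamma>" and "4 * \<gamma> < \<epsilon>" and "\<epsilon> < 1 / 2"
    and "L > 0" and "\<delta> = 1 / L"
    and "\<sigma> \<in> sign_vecs d"
    and "p \<in> gol_dual_L d \<epsilon> \<gamma> L"
    and "inner_d d (stretch d \<delta> (gol_vertex \<epsilon> \<gamma> \<sigma>)) p = 1"
    and "\<forall>\<tau>\<in>sign_vecs d. (\<exists>k\<in>{1..d}. \<tau> k \<noteq> \<sigma> k) \<longrightarrow>
           inner_d d (stretch d \<delta> (gol_vertex \<epsilon> \<gamma> \<tau>)) p < 1"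
  shows "\<exists>\<alpha> :: nat \<Rightarrow> real.
           (\<forall>k\<in>{1..d}. \<alpha> k > 0) \<and> (\<Sum>k=1..d. \<alpha> k) = 1 \<and>
           p = (\<lambda>i. \<Sum>k=1..d. \<alpha> k * stretch d L (gol_w \<epsilon> \<gamma> k (\<sigma> k)) i) \<and>
           (\<forall>a :: nat \<times> int \<Rightarrow> real.
              (\<forall>ks\<in>w_index d. a ks \<ge> 0) \<and> (\<Sum>ks\<in>w_index d. a ks) = 1 \<and>
              p = w_comb d \<epsilon> \<gamma> L a
              \<longrightarrow> (\<forall>(k, s)\<in>w_index d. a (k, s) = (if s = \<sigma> k then \<alpha> k else 0)))"
proof -
  note A = assms
  have p': "0 < \<epsilon>" "\<epsilon> < 1/2" "0 < \<gamma>" using A(2,3,4) by auto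
  have p: "0 < 4*\<gamma>" "4*\<gamma> < \<epsilon>" "\<epsilon> < 1/2" using A by auto
  have dL: "\<delta> * L = 1" using A(5,6) by simp
  have fin: "finite (w_index d)" unfolding w_index_def by simp
  obtain a0 where a0: "\<forall>ks\<in>w_index d. a0 ks \<ge> 0" "(\<Sum>ks\<in>w_index d. a0 ks) = 1"
    "p = w_comb d \<epsilon> \<gamma> L a0"
    using A(8) unfolding gol_dual_L_def by blast
  define F where "F \<tau> ks = inner_d d (gol_vertex \<epsilon> \<gamma> \<tau>) (case_prod (gol_w \<epsilon> \<gamma>) ks)" for \<tau> ks
  have innerp: "inner_d d (stretch d \<delta> (gol_vertex \<epsilon> \<gamma> \<tau>)) p = (\<Sum>ks\<in>w_index d. a ks * F \<tau> ks)"
    if "p = w_comb d \<epsilon> \<gamma> L a" for a \<tau>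
    using inner_stretch[OF dL, where d=d and v="gol_vertex \<epsilon> \<gamma> \<tau>" and J="w_index d" and c=a and W="case_prod (gol_w \<epsilon> \<gamma>)"] that
    by (simp add: w_comb_alt F_def)
  have wI: "ks \<in> w_index d \<longleftrightarrow> fst ks \<in> {1..d} \<and> (snd ks = -1 \<or> snd ks = 1)" for ks
    unfolding w_index_def by (cases ks) auto
  have Fle: "F \<tau> ks \<le> 1" if "\<tau> \<in> sign_vecs d" "ks \<in> w_index d" for \<tau> ks
  proof -
    obtain k s where ks: "ks = (k, s)" by (cases ks)
    have k: "1 \<le> k" "k \<le> d" "s = -1 \<or> s = 1" using that(2) wI[of ks] ks by auto
    have Fk: "F \<tau> ks = inner_d d (gol_vertex \<epsilon> \<gamma> \<tau>) (gol_w \<epsilon> \<gamma> k s)"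
      unfolding F_def ks by simp
    show ?thesis
    proof (cases "s = \<tau> k")
      case True
      from F_vals(1)[OF that(1) p A(1) k True] show ?thesis unfolding Fk by simp
    next
      case False
      from F_vals(2)[OF that(1) p A(1) k False] show ?thesis unfolding Fk by simp
    qed
  qed
  have Flt: "F \<sigma> ks < 1" if "ks \<in> w_index d" "snd ks \<noteq> \<sigma> (fst ks)" for ks
  proof -
    obtain k s where ks: "ks = (k, s)" by (cases ks)
    have k: "1 \<le> k" "k \<le> d" "s = -1 \<or> s = 1" using that(1) wI[of ks] ks by auto
    show ?thesis using F_vals(2)[OF A(7) p A(1) k] ks that(2) unfolding F_def by simp
  qed
  have Feq: "F \<tau> (k, \<tau> k) = 1" if "\<tau> \<in> sign_vecs d" "k \<in> {1..d}" for \<tau> k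
  proof -
    have "\<tau> k = -1 \<or> \<tau> k = 1" using sign_cases[OF that] .
    then show ?thesis using F_vals(1)[OF that(1) p A(1), of k "\<tau> k"] that(2) unfolding F_def by auto
  qed
  have zero: "a ks = 0"
    if a: "\<forall>ks\<in>w_index d. a ks \<ge> 0" "(\<Sum>ks\<in>w_index d. a ks) = 1" "p = w_comb d \<epsilon> \<gamma> L a"
      and ks: "ks \<in> w_index d" "snd ks \<noteq> \<sigma> (fst ks)" for a ks
  proof -
    have "(\<Sum>ks\<in>w_index d. a ks * F \<sigma> ks) = 1" using innerp[OF a(3)] A(9) by simp
    moreover have "(\<Sum>ks\<in>w_index d. a ks * (1 - F \<sigma> ks)) =
        (\<Sum>ks\<in>w_index d. a ks) - (\<Sum>ks\<in>w_index d. a ks * F \<sigma> ks)"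
      by (simp only: right_diff_distrib mult_1_right sum_subtractf)
    ultimately have s0: "(\<Sum>ks\<in>w_index d. a ks * (1 - F \<sigma> ks)) = 0"
      using a(2) by simp
    have nn: "\<And>x. x \<in> w_index d \<Longrightarrow> 0 \<le> a x * (1 - F \<sigma> x)"
    proof -
      fix x assume x: "x \<in> w_index d"
      have "0 \<le> a x" using a(1) x by blast
      moreover have "0 \<le> 1 - F \<sigma> x" using Fle[OF A(7) x] by simp
      ultimately show "0 \<le> a x * (1 - F \<sigma> x)" by simp
    qed
    have "\<forall>x\<in>w_index d. a x * (1 - F \<sigma> x) = 0"
      using sum_nonneg_eq_0_iff[where f="\<lambda>x. a x * (1 - F \<sigma> x)" and A="w_index d"] fin nn s0 by blast
    then have "a ks * (1 - F \<sigma> ks) = 0" using ks(1) by blast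
    then show ?thesis using Flt[OF ks] by simp
  qed
  have zero': "\<forall>k\<in>{1..d}. a (k, - \<sigma> k) = 0"
    if a: "\<forall>ks\<in>w_index d. a ks \<ge> 0" "(\<Sum>ks\<in>w_index d. a ks) = 1" "p = w_comb d \<epsilon> \<gamma> L a" for a
  proof
    fix k assume k: "k \<in> {1..d}"
    have "\<sigma> k = -1 \<or> \<sigma> k = 1" using sign_cases[OF A(7) k] .
    then have "(k, - \<sigma> k) \<in> w_index d" "snd (k, - \<sigma> k) \<noteq> \<sigma> (fst (k, - \<sigma> k))"
      using k wI[of "(k, - \<sigma> k)"] by auto
    then show "a (k, - \<sigma> k) = 0" using zero[OF a] by blast
  qed
  have red: "p = (\<lambda>i. \<Sum>k=1..d. a (k, \<sigma> k) * stretch d L (gol_w \<epsilon> \<gamma> k (\<sigma> k)) i)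
      \<and> (\<Sum>k=1..d. a (k, \<sigma> k)) = 1"
    if a: "\<forall>ks\<in>w_index d. a ks \<ge> 0" "(\<Sum>ks\<in>w_index d. a ks) = 1" "p = w_comb d \<epsilon> \<gamma> L a" for a
  proof
    have z: "\<forall>k\<in>{1..d}. a (k, - \<sigma> k) = 0" using zero'[OF a] .
    show "p = (\<lambda>i. \<Sum>k=1..d. a (k, \<sigma> k) * stretch d L (gol_w \<epsilon> \<gamma> k (\<sigma> k)) i)"
    proof
      fix i
      have "p i = (\<Sum>ks\<in>w_index d. a ks * stretch d L (case_prod (gol_w \<epsilon> \<gamma>) ks) i)"
        using a(3) by (simp add: w_comb_alt)
      also have "\<dots> = (\<Sum>k=1..d. a (k, \<sigma> k) * stretch d L (gol_w \<epsilon> \<gamma> k (\<sigma> k)) i)"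
        using sum_sigma[OF A(7), where f="\<lambda>ks. a ks * stretch d L (case_prod (gol_w \<epsilon> \<gamma>) ks) i"] z by simp
      finally show "p i = (\<Sum>k=1..d. a (k, \<sigma> k) * stretch d L (gol_w \<epsilon> \<gamma> k (\<sigma> k)) i)" .
    qed
    show "(\<Sum>k=1..d. a (k, \<sigma> k)) = 1" using sum_sigma[OF A(7) z] a(2) by simp
  qed
  define \<alpha> where "\<alpha> k = a0 (k, \<sigma> k)" for k
  have red0: "p = (\<lambda>i. \<Sum>k=1..d. \<alpha> k * stretch d L (gol_w \<epsilon> \<gamma> k (\<sigma> k)) i)"
      "(\<Sum>k=1..d. \<alpha> k) = 1"
    using red[OF a0] unfolding \<alpha>_def by auto
  have pos: "\<alpha> j > 0" if j: "j \<in> {1..d}" for j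
  proof (rule ccontr)
    assume "\<not> \<alpha> j > 0"
    moreover have sj: "\<sigma> j = -1 \<or> \<sigma> j = 1" using sign_cases[OF A(7) j] .
    then have "(j, \<sigma> j) \<in> w_index d" using j wI[of "(j, \<sigma> j)"] by auto
    then have "\<alpha> j \<ge> 0" using a0(1) unfolding \<alpha>_def by auto
    ultimately have aj: "\<alpha> j = 0" by simp
    define \<tau> where "\<tau> = \<sigma>(j := - \<sigma> j)"
    have t: "\<tau> \<in> sign_vecs d" using A(7) sj unfolding \<tau>_def sign_vecs_def by auto
    have "\<tau> j \<noteq> \<sigma> j" using sj unfolding \<tau>_def by auto
    then have "inner_d d (stretch d \<delta> (gol_vertex \<epsilon> \<gamma> \<tau>)) p < 1" using A(10) t j by blast
    moreover have "inner_d d (stretch d \<delta> (gol_vertex \<epsilon> \<gamma> \<tau>)) p = 1"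
    proof -
      have "inner_d d (stretch d \<delta> (gol_vertex \<epsilon> \<gamma> \<tau>)) p = (\<Sum>ks\<in>w_index d. a0 ks * F \<tau> ks)"
        using innerp[OF a0(3)] .
      also have "\<dots> = (\<Sum>k=1..d. a0 (k, \<sigma> k) * F \<tau> (k, \<sigma> k))"
        using sum_sigma[OF A(7), where f="\<lambda>ks. a0 ks * F \<tau> ks"] zero'[OF a0] by simp
      also have "\<dots> = (\<Sum>k=1..d. \<alpha> k)"
      proof (rule sum.cong[OF refl])
        fix k assume k: "k \<in> {1..d}"
        show "a0 (k, \<sigma> k) * F \<tau> (k, \<sigma> k) = \<alpha> k"
        proof (cases "k = j")
          case True then show ?thesis using aj unfolding \<alpha>_def by simp
        next
          case False
          then have "\<sigma> k = \<tau> k" unfolding \<tau>_def by simp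
          then show ?thesis using Feq[OF t k] unfolding \<alpha>_def by simp
        qed
      qed
      finally show ?thesis using red0(2) by simp
    qed
    ultimately show False by simp
  qed
  show ?thesis
  proof (intro exI[of _ \<alpha>] conjI allI impI ballI)
    show "\<And>k. k \<in> {1..d} \<Longrightarrow> 0 < \<alpha> k" using pos by blast
    show "(\<Sum>k=1..d. \<alpha> k) = 1" by (rule red0(2))
    show "p = (\<lambda>i. \<Sum>k=1..d. \<alpha> k * stretch d L (gol_w \<epsilon> \<gamma> k (\<sigma> k)) i)" by (rule red0(1))
  next
    fix a :: "nat \<times> int \<Rightarrow> real" and ks
    assume H: "(\<forall>ks\<in>w_index d. a ks \<ge> 0) \<and> (\<Sum>ks\<in>w_index d. a ks) = 1 \<and> p = w_comb d \<epsilon> \<gamma> L a"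
      and ks: "ks \<in> w_index d"
    have a: "\<forall>ks\<in>w_index d. a ks \<ge> 0" "(\<Sum>ks\<in>w_index d. a ks) = 1" "p = w_comb d \<epsilon> \<gamma> L a"
      using H by auto
    have "\<forall>i. (\<Sum>k=1..d. (a (k, \<sigma> k) - \<alpha> k) * stretch d L (gol_w \<epsilon> \<gamma> k (\<sigma> k)) i) = 0"
    proof
      fix i
      have "p i = (\<Sum>k=1..d. a (k, \<sigma> k) * stretch d L (gol_w \<epsilon> \<gamma> k (\<sigma> k)) i)"
        using red[OF a] by simp
      moreover have "p i = (\<Sum>k=1..d. \<alpha> k * stretch d L (gol_w \<epsilon> \<gamma> k (\<sigma> k)) i)"
        using red0(1) by simp
      ultimately show "(\<Sum>k=1..d. (a (k, \<sigma> k) - \<alpha> k) * stretch d L (gol_w \<epsilon> \<gamma> k (\<sigma> k)) i) = 0"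
        by (simp add: left_diff_distrib sum_subtractf)
    qed
    from indep[OF A(7) p' _ this] A(5)
    have eqa: "\<forall>k\<in>{1..d}. a (k, \<sigma> k) = \<alpha> k" by auto
    obtain k s where kse: "ks = (k, s)" by (cases ks)
    show "case ks of (k, s) \<Rightarrow> a (k, s) = (if s = \<sigma> k then \<alpha> k else 0)"
    proof (cases "s = \<sigma> k")
      case True
      have "k \<in> {1..d}" using ks kse wI[of ks] by auto
      with True show ?thesis using eqa kse by auto
    next
      case False then show ?thesis using zero[OF a ks] kse by auto
    qed
  qed
qed

end
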